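(* Let $p$ be a prime and $a,b$ positive integers. In the $(p^a,p^b)$-game there is a winning sequence of exactly $p^{b p^a}-1$ moves.
   Context: The $(n,m)$-game: $n$ counters at positions $1,\dots,n$ (vertices in cyclic order of a regular $n$-gon table), each showing an element of $\mathbb{Z}_m$; a configuration is a vector in $\mathbb{Z}_m^n$, initially arbitrary and unknown. Each turn the player chooses a move $y\in\mathbb{Z}_m^n$ added coordinatewise, then the table is rotated by an adversarially chosen $k\in\mathbb{Z}_n$, replacing $x$ by $x'$ with $x'_{i+k}=x_i$ (indices mod $n$). The player wins if at some moment (including initially) all counters show $0$. A strategy is a finite sequence of moves; it is winning if it forces the zero configuration at some time for every initial configuration and every choice of rotations. *)

theory Defs
  imports "HOL-Computational_Algebra.Primes"
begin

text \<open>Configurations of the (n,m)-game: vectors in Z_m^n, represented as functions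
  nat => nat with entries < m on positions 0..n-1 (positions 1..n of the paper,
  shifted) and 0 elsewhere (extensional).\<close>

definition valid_config :: "nat \<Rightarrow> nat \<Rightarrow> (nat \<Rightarrow> nat) \<Rightarrow> bool" where
  "valid_config n m x \<longleftrightarrow> (\<forall>i<n. x i < m) \<and> (\<forall>i. n \<le> i \<longrightarrow> x i = 0)"

definition add_move :: "nat \<Rightarrow> nat \<Rightarrow> (nat \<Rightarrow> nat) \<Rightarrow> (nat \<Rightarrow> nat) \<Rightarrow> (nat \<Rightarrow> nat)" where
  "add_move n m x y = (\<lambda>i. if i < n then (x i + y i) mod m else 0)"

definition rotate_config :: "nat \<Rightarrow> nat \<Rightarrow> (nat \<Rightarrow> nat) \<Rightarrow> (nat \<Rightarrow> nat)" where
  "rotate_config n k x = (\<lambda>j. if j < n then x ((j + n - k) mod n) else 0)"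

fun game_state :: "nat \<Rightarrow> nat \<Rightarrow> (nat \<Rightarrow> nat) list \<Rightarrow> (nat \<Rightarrow> nat) \<Rightarrow> (nat \<Rightarrow> nat) \<Rightarrow> nat \<Rightarrow> (nat \<Rightarrow> nat)" where
  "game_state n m ys ks x 0 = x"
| "game_state n m ys ks x (Suc t) =
     rotate_config n (ks t) (add_move n m (game_state n m ys ks x t) (ys ! t))"

definition winning :: "nat \<Rightarrow> nat \<Rightarrow> (nat \<Rightarrow> nat) list \<Rightarrow> bool" where
  "winning n m ys \<longleftrightarrow>
     (\<forall>y\<in>set ys. valid_config n m y) \<and>
     (\<forall>x ks. valid_config n m x \<longrightarrow> (\<forall>t. ks t < n) \<longrightarrow>
        (\<exists>t\<le>length ys. game_state n m ys ks x t = (\<lambda>_. 0)))"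

end

theory Submission
  imports Defs
begin


definition rot :: "nat \<Rightarrow> nat \<Rightarrow> (nat \<Rightarrow> int) \<Rightarrow> (nat \<Rightarrow> int)" where
  "rot n k u = (\<lambda>l. u ((l + n - k) mod n))"

fun istate :: "nat \<Rightarrow> (nat \<Rightarrow> int) list \<Rightarrow> (nat \<Rightarrow> nat) \<Rightarrow> (nat \<Rightarrow> int) \<Rightarrow> nat \<Rightarrow> (nat \<Rightarrow> int)" where
  "istate n W ks u 0 = u"
| "istate n W ks u (Suc t) = rot n (ks t) (\<lambda>l. istate n W ks u t l + (W ! t) l)"

lemma istate_prefix:
  "t \<le> length W1 \<Longrightarrow> istate n (W1 @ W2) ks u t = istate n W1 ks u t"
  by (induction t) (auto simp: nth_append)

lemma istate_append:
  "istate n (W1 @ W2) ks u (length W1 + t) =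
   istate n W2 (\<lambda>t. ks (length W1 + t)) (istate n W1 ks u (length W1)) t"
proof (induction t)
  case 0
  then show ?case using istate_prefix[of "length W1" W1 n W2 ks u] by simp
next
  case (Suc t)
  then show ?case by (simp add: nth_append)
qed

fun blocks :: "(nat \<Rightarrow> int) list \<Rightarrow> (nat \<Rightarrow> int) \<Rightarrow> nat \<Rightarrow> (nat \<Rightarrow> int) list" where
  "blocks S g 0 = S"
| "blocks S g (Suc r) = S @ g # blocks S g r"

lemma length_blocks: "length (blocks S g r) = Suc r * length S + r"
  by (induction r) auto

lemma set_blocks: "set (blocks S g r) \<subseteq> set S \<union> {g}"
  by (induction r) auto

locale strat_chain =
  fixes n p :: nat and V :: "nat \<Rightarrow> (nat \<Rightarrow> int) \<Rightarrow> bool" and gen :: "nat \<Rightarrow> nat \<Rightarrow> int"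
    and Z :: "(nat \<Rightarrow> int) \<Rightarrow> bool" and N :: nat
  assumes p_pos: "0 < p"
  and V0: "\<And>u. V 0 u \<Longrightarrow> Z u"
  and Vadd: "\<And>i u w. V i u \<Longrightarrow> V i w \<Longrightarrow> V i (\<lambda>l. u l + w l)"
  and Vsmult: "\<And>i u c. V i u \<Longrightarrow> V i (\<lambda>l. c * u l)"
  and Vmono: "\<And>i u. V i u \<Longrightarrow> V (Suc i) u"
  and Vdiff: "\<And>i k u. i < N \<Longrightarrow> k < n \<Longrightarrow> V (Suc i) u \<Longrightarrow> V i (\<lambda>l. rot n k u l - u l)"
  and Vdec: "\<And>i u. i < N \<Longrightarrow> V (Suc i) u \<Longrightarrow> \<exists>c. V i (\<lambda>l. u l - c * gen i l)"
  and Vgen: "\<And>i. i < N \<Longrightarrow> V (Suc i) (gen i)"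
  and Vpgen: "\<And>i. i < N \<Longrightarrow> V i (\<lambda>l. int p * gen i l)"
begin

lemma Vsub: "V i u \<Longrightarrow> V i w \<Longrightarrow> V i (\<lambda>l. u l - w l)"
proof -
  assume "V i u" "V i w"
  then have "V i (\<lambda>l. u l + (\<lambda>l. (-1) * w l) l)" using Vadd Vsmult by blast
  then show ?thesis by simp
qed

fun strat :: "nat \<Rightarrow> (nat \<Rightarrow> int) list" where
  "strat 0 = []"
| "strat (Suc i) = blocks (strat i) (gen i) (p - 1)"

lemma length_strat: "length (strat i) + 1 = p ^ i"
proof (induction i)
  case 0 then show ?case by simp
next
  case (Suc i)
  have "length (strat (Suc i)) + 1 = p * length (strat i) + (p - 1) + 1"
    using p_pos by (simp add: length_blocks)
  also have "\<dots> = p * (length (strat i) + 1)" using p_pos by (simp add: algebra_simps)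
  also have "\<dots> = p ^ Suc i" using Suc.IH by simp
  finally show ?case .
qed

lemma pres:
  assumes W: "\<forall>w\<in>set W. V i w" and u: "V (Suc i) u" and ks: "\<forall>t. ks t < n" and iN: "i < N"
  shows "t \<le> length W \<Longrightarrow> V (Suc i) (istate n W ks u t) \<and> V i (\<lambda>l. istate n W ks u t l - u l)"
proof (induction t)
  case 0
  have "V i (\<lambda>l. 0 * (rot n (ks 0) u l - u l))" using Vsmult[OF Vdiff[OF iN ks[rule_format, of 0] u]] .
  then show ?case using u by simp
next
  case (Suc t)
  let ?s = "istate n W ks u t"
  let ?w = "W ! t"
  have IH: "V (Suc i) ?s" "V i (\<lambda>l. ?s l - u l)" using Suc by auto
  have w: "V i ?w" using W Suc.prems by auto
  have sw: "V (Suc i) (\<lambda>l. ?s l + ?w l)" using Vadd IH(1) Vmono[OF w] by blast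
  have d: "V i (\<lambda>l. rot n (ks t) (\<lambda>l. ?s l + ?w l) l - (?s l + ?w l))"
    using Vdiff[OF iN ks[rule_format] sw] by simp
  have "V i (\<lambda>l. (rot n (ks t) (\<lambda>l. ?s l + ?w l) l - (?s l + ?w l)) + ((?s l - u l) + ?w l))"
    using Vadd[OF d Vadd[OF IH(2) w]] by simp
  then have A: "V i (\<lambda>l. istate n W ks u (Suc t) l - u l)" by (simp add: algebra_simps)
  have "V (Suc i) (\<lambda>l. (rot n (ks t) (\<lambda>l. ?s l + ?w l) l - (?s l + ?w l)) + (?s l + ?w l))"
    using Vadd[OF Vmono[OF d] sw] by simp
  then have B: "V (Suc i) (istate n W ks u (Suc t))" by simp
  show ?case using A B by blast
qed

lemma main_chain:
  "i \<le> N \<Longrightarrow> (\<forall>w\<in>set (strat i). V i w) \<and>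
     (\<forall>u ks. (\<forall>t. ks t < n) \<longrightarrow> V i u \<longrightarrow> (\<exists>t\<le>length (strat i). Z (istate n (strat i) ks u t)))"
proof (induction i)
  case 0
  then show ?case using V0 by auto
next
  case (Suc i)
  then have iN: "i < N" by simp
  let ?S = "strat i" and ?g = "gen i"
  have IHm: "\<forall>w\<in>set ?S. V i w" and IHw: "\<And>u ks. \<forall>t. ks t < n \<Longrightarrow> V i u \<Longrightarrow> \<exists>t\<le>length ?S. Z (istate n ?S ks u t)"
    using Suc by auto
  have claim: "\<And>u ks c. \<forall>t. ks t < n \<Longrightarrow> V (Suc i) u \<Longrightarrow> V i (\<lambda>l. u l - c * ?g l) \<Longrightarrow>
      (\<exists>r'\<le>r. int p dvd c + int r') \<Longrightarrow> \<exists>t\<le>length (blocks ?S ?g r). Z (istate n (blocks ?S ?g r) ks u t)" for r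
  proof (induction r)
    case (0 u ks c)
    then have "int p dvd c" by auto
    then obtain q where q: "c = int p * q" by (auto elim: dvdE)
    have "V i (\<lambda>l. (u l - c * ?g l) + q * (int p * ?g l))"
      using Vadd[OF "0.prems"(3) Vsmult[OF Vpgen[OF iN]]] by simp
    then have "V i u" by (simp add: q algebra_simps)
    then show ?case using IHw "0.prems"(1) by simp
  next
    case (Suc r u ks c)
    obtain r' where r': "r' \<le> Suc r" "int p dvd c + int r'" using Suc.prems(4) by blast
    show ?case
    proof (cases r')
      case 0
      then have "int p dvd c" using r' by simp
      then obtain q where q: "c = int p * q" by (auto elim: dvdE)
      have "V i (\<lambda>l. (u l - c * ?g l) + q * (int p * ?g l))"
        using Vadd[OF Suc.prems(3) Vsmult[OF Vpgen[OF iN]]] by simp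
      then have "V i u" by (simp add: q algebra_simps)
      then obtain t where t: "t \<le> length ?S" "Z (istate n ?S ks u t)" using IHw Suc.prems(1) by blast
      have "istate n (blocks ?S ?g (Suc r)) ks u t = istate n ?S ks u t"
        using istate_prefix[OF t(1)] by simp
      then show ?thesis using t by (intro exI[of _ t]) (simp add: length_blocks)
    next
      case (Suc r'')
      let ?B = "?S @ [?g]"
      have eq: "blocks ?S ?g (Suc r) = ?B @ blocks ?S ?g r" by simp
      let ?e = "istate n ?S ks u (length ?S)"
      have pr: "V (Suc i) ?e" "V i (\<lambda>l. ?e l - u l)"
        using pres[OF IHm Suc.prems(2) Suc.prems(1) iN, of "length ?S"] by auto
      let ?s' = "istate n ?B ks u (length ?B)"
      have s'eq: "?s' = rot n (ks (length ?S)) (\<lambda>l. ?e l + ?g l)"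
        using istate_prefix[of "length ?S" ?S n "[?g]" ks u] by simp
      have eg: "V (Suc i) (\<lambda>l. ?e l + ?g l)" using Vadd[OF pr(1) Vgen[OF iN]] .
      have d: "V i (\<lambda>l. ?s' l - (?e l + ?g l))"
        using Vdiff[OF iN Suc.prems(1)[rule_format] eg] s'eq by simp
      have s'V: "V (Suc i) ?s'"
        using Vadd[OF Vmono[OF d] eg] by simp
      have "V i (\<lambda>l. (?s' l - (?e l + ?g l)) + ((?e l - u l) + (u l - c * ?g l)))"
        using Vadd[OF d Vadd[OF pr(2) Suc.prems(3)]] by simp
      then have c1: "V i (\<lambda>l. ?s' l - (c + 1) * ?g l)" by (simp add: algebra_simps)
      have ex: "\<exists>r'\<le>r. int p dvd (c + 1) + int r'"
        using r' Suc by (intro exI[of _ r'']) (auto simp: algebra_simps)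
      have ks': "\<forall>t. ks (length ?B + t) < n" using Suc.prems(1) by simp
      obtain t where t: "t \<le> length (blocks ?S ?g r)"
          "Z (istate n (blocks ?S ?g r) (\<lambda>t. ks (length ?B + t)) ?s' t)"
        using Suc.IH[OF ks' s'V c1 ex] by blast
      have "istate n (blocks ?S ?g (Suc r)) ks u (length ?B + t) =
            istate n (blocks ?S ?g r) (\<lambda>t. ks (length ?B + t)) ?s' t"
        unfolding eq by (rule istate_append)
      then show ?thesis using t by (intro exI[of _ "length ?B + t"]) (auto simp: length_blocks)
    qed
  qed
  have moves: "\<forall>w\<in>set (strat (Suc i)). V (Suc i) w"
    using set_blocks[of ?S ?g "p - 1"] IHm Vmono Vgen[OF iN] by auto
  have win: "\<exists>t\<le>length (strat (Suc i)). Z (istate n (strat (Suc i)) ks u t)"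
    if ks: "\<forall>t. ks t < n" and u: "V (Suc i) u" for u ks
  proof -
    obtain c where c: "V i (\<lambda>l. u l - c * ?g l)" using Vdec[OF iN u] by blast
    have "0 \<le> (- c) mod int p" "(- c) mod int p < int p" using p_pos by auto
    then have "nat ((- c) mod int p) < p" by (simp add: nat_less_iff)
    then have "nat ((- c) mod int p) \<le> p - 1" by simp
    moreover have "int p dvd c + int (nat ((- c) mod int p))"
    proof -
      have "(c + (- c) mod int p) mod int p = (c + - c) mod int p" by (rule mod_add_right_eq)
      then have "int p dvd c + (- c) mod int p" by (simp add: mod_0_imp_dvd)
      then show ?thesis using \<open>0 \<le> (- c) mod int p\<close> by simp
    qed
    ultimately have "\<exists>r'\<le>p - 1. int p dvd c + int r'" by blast
    from claim[OF ks u c this] show ?thesis by simp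
  qed
  show ?case using moves win by blast
qed

end



definition D :: "nat \<Rightarrow> (nat \<Rightarrow> int) \<Rightarrow> (nat \<Rightarrow> int)" where
  "D n u = (\<lambda>l. u l - u ((l + n - 1) mod n))"

definition e0 :: "nat \<Rightarrow> int" where "e0 = (\<lambda>l. if l = 0 then 1 else 0)"

lemma D_pow_lin:
  "(D n ^^ j) (\<lambda>l. u l - c * v l) = (\<lambda>l. (D n ^^ j) u l - c * (D n ^^ j) v l)"
  by (induction j) (auto simp: D_def algebra_simps)

lemma D_pow_add:
  "(D n ^^ j) (\<lambda>l. u l + v l) = (\<lambda>l. (D n ^^ j) u l + (D n ^^ j) v l)"
  using D_pow_lin[where n=n and j=j and u=u and c="-1" and v=v] by simp

lemma D_pow_smult:
  "(D n ^^ j) (\<lambda>l. c * v l) = (\<lambda>l. c * (D n ^^ j) v l)"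
  by (induction j) (auto simp: D_def algebra_simps)

lemma D_dvd1: "0 < n \<Longrightarrow> \<forall>l<n. d dvd w l \<Longrightarrow> l < n \<Longrightarrow> d dvd D n w l"
  unfolding D_def by (intro dvd_diff) auto

lemma D_pow_dvd: "0 < n \<Longrightarrow> \<forall>l<n. d dvd u l \<Longrightarrow> l < n \<Longrightarrow> d dvd (D n ^^ j) u l"
proof (induction j arbitrary: l)
  case 0 then show ?case by simp
next
  case (Suc j) then show ?case using D_dvd1[of n d "(D n ^^ j) u" l] by simp
qed

lemma rot_idx:
  fixes k n l :: nat
  assumes "k < n" shows "((l + n - 1) mod n + n - k) mod n = ((l + n - k) mod n + n - 1) mod n"
proof -
  have ad: "x + n - k = x + (n - k)" for x using assms by arith
  have "((l + n - 1) mod n + n - k) mod n = ((l + n - 1) mod n + (n - k)) mod n"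
    by (simp only: ad)
  also have "\<dots> = (l + n - 1 + (n - k)) mod n" by (simp add: mod_add_left_eq)
  also have "l + n - 1 + (n - k) = l + n - k + (n - 1)" using assms by simp
  also have "(l + n - k + (n - 1)) mod n = ((l + n - k) mod n + (n - 1)) mod n" by (simp add: mod_add_left_eq)
  also have "\<dots> = ((l + n - k) mod n + n - 1) mod n"
  proof -
    have "x + (n - 1) = x + n - 1" for x using assms by arith
    then show ?thesis by (simp only:)
  qed
  finally show ?thesis .
qed

lemma D_rot: "k < n \<Longrightarrow> D n (rot n k u) = rot n k (D n u)"
  unfolding D_def rot_def using rot_idx[of k n] by simp

lemma D_pow_rot: "k < n \<Longrightarrow> (D n ^^ j) (rot n k u) = rot n k ((D n ^^ j) u)"
  by (induction j) (auto simp: D_rot)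

lemma pascal_sum:
  fixes f :: "nat \<Rightarrow> int"
  shows "(\<Sum>k\<le>j. (-1)^k * int (j choose k) * f k) - (\<Sum>k\<le>j. (-1)^k * int (j choose k) * f (Suc k))
       = (\<Sum>k\<le>Suc j. (-1)^k * int (Suc j choose k) * f k)"
proof -
  have A: "(\<Sum>k\<le>j. (-1)^k * int (j choose k) * f k) = f 0 + (\<Sum>k\<le>j. (-1)^Suc k * int (j choose Suc k) * f (Suc k))"
  proof -
    have "(\<Sum>k\<le>j. (-1)^k * int (j choose k) * f k) = (\<Sum>k\<le>Suc j. (-1)^k * int (j choose k) * f k)"
      by simp
    also have "\<dots> = f 0 + (\<Sum>k\<le>j. (-1)^Suc k * int (j choose Suc k) * f (Suc k))"
      by (subst sum.atMost_Suc_shift) simp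
    finally show ?thesis .
  qed
  have B: "(\<Sum>k\<le>Suc j. (-1)^k * int (Suc j choose k) * f k) =
     f 0 + (\<Sum>k\<le>j. (-1)^Suc k * int (j choose k) * f (Suc k)) + (\<Sum>k\<le>j. (-1)^Suc k * int (j choose Suc k) * f (Suc k))"
    by (subst sum.atMost_Suc_shift) (simp add: sum.distrib[symmetric] algebra_simps)
  show ?thesis unfolding A B by (simp add: sum_negf)
qed

lemma D_formula:
  "j \<le> n \<Longrightarrow> l < n \<Longrightarrow> (D n ^^ j) u l = (\<Sum>k\<le>j. (-1)^k * int (j choose k) * u ((l + n - k) mod n))"
proof (induction j arbitrary: l)
  case 0 then show ?case by simp
next
  case (Suc j)
  have n: "0 < n" using Suc by simp
  let ?l1 = "(l + n - 1) mod n"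
  have l1: "?l1 < n" using n by simp
  have idx: "(?l1 + n - k) mod n = (l + n - Suc k) mod n" if "k \<le> j" for k
  proof -
    have "(?l1 + n - k) mod n = (?l1 + (n - k)) mod n" using that Suc.prems by simp
    also have "\<dots> = (l + n - 1 + (n - k)) mod n" by (simp add: mod_add_left_eq)
    also have "l + n - 1 + (n - k) = (l + n - Suc k) + n" using that Suc.prems by simp
    finally show ?thesis by simp
  qed
  have "(D n ^^ Suc j) u l = (D n ^^ j) u l - (D n ^^ j) u ?l1" by (simp add: D_def)
  also have "\<dots> = (\<Sum>k\<le>j. (-1)^k * int (j choose k) * u ((l + n - k) mod n))
       - (\<Sum>k\<le>j. (-1)^k * int (j choose k) * u ((l + n - Suc k) mod n))"
    using Suc.IH[of l] Suc.IH[of ?l1] Suc.prems l1 idx by simp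
  also have "\<dots> = (\<Sum>k\<le>Suc j. (-1)^k * int (Suc j choose k) * u ((l + n - k) mod n))"
    using pascal_sum[of j "\<lambda>k. u ((l + n - k) mod n)"] by simp
  finally show ?case .
qed

lemma prime_dvd_choose_pow:
  assumes p: "prime p" and k: "0 < k" "k < p ^ a"
  shows "p dvd (p ^ a choose k)"
proof (rule ccontr)
  assume nd: "\<not> p dvd (p ^ a choose k)"
  have "k * (p ^ a choose k) = p ^ a * ((p ^ a - 1) choose (k - 1))"
    by (rule times_binomial_minus1_eq[OF k(1)])
  then have "p ^ a dvd k * (p ^ a choose k)" by simp
  moreover have "coprime (p ^ a) (p ^ a choose k)"
    using nd p by (simp add: prime_imp_coprime)
  ultimately have "p ^ a dvd k" using coprime_dvd_mult_left_iff by blast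
  then show False using k by (simp add: nat_dvd_not_less)
qed

lemma p_dvd_1_plus:
  assumes p: "prime p" and a: "0 < a"
  shows "int p dvd 1 + (-1) ^ (p ^ a)"
proof (cases "p = 2")
  case True
  then have "even (p ^ a)" using a by simp
  then show ?thesis using True by simp
next
  case False
  then have "odd p" using p prime_odd_nat prime_ge_2_nat[OF p] by fastforce
  then have "odd (p ^ a)" by simp
  then show ?thesis by simp
qed

lemma F2:
  assumes p: "prime p" and a: "0 < a" and nn: "n = p ^ a"
    and u: "\<forall>l<n. int p ^ e dvd u l" and l: "l < n"
  shows "int p ^ Suc e dvd (D n ^^ n) u l"
proof -
  have n: "0 < n" using l by simp
  let ?h = "\<lambda>k. (-1)^k * int (n choose k) * u ((l + n - k) mod n)"
  have set: "{..n} = insert 0 (insert n {1..<n})" using n by auto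
  have "(D n ^^ n) u l = sum ?h {..n}" using D_formula[of n n l u] l by simp
  also have "\<dots> = ?h 0 + (?h n + sum ?h {1..<n})" unfolding set using n by simp
  finally have s1: "(D n ^^ n) u l = ?h 0 + ?h n + sum ?h {1..<n}" by (simp add: add.assoc)
  have s2: "?h 0 + ?h n = (1 + (-1)^n) * u l" using l by (simp add: algebra_simps)
  have eq: "(D n ^^ n) u l = (1 + (-1)^n) * u l + sum ?h {1..<n}" using s1 s2 by simp
  have t1: "int p ^ Suc e dvd (1 + (-1)^n) * u l"
    using mult_dvd_mono[OF p_dvd_1_plus[OF p a] u[rule_format, OF l]] nn by simp
  have t2: "int p ^ Suc e dvd sum ?h {1..<n}"
  proof (rule dvd_sum)
    fix k assume k: "k \<in> {1..<n}"
    have "p dvd (n choose k)" using prime_dvd_choose_pow[OF p, of k a] k nn by auto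
    then have "int p dvd int (n choose k)" by simp
    moreover have "int p ^ e dvd u ((l + n - k) mod n)" using u n by simp
    ultimately have "int p * int p ^ e dvd int (n choose k) * u ((l + n - k) mod n)"
      by (rule mult_dvd_mono)
    then show "int p ^ Suc e dvd ?h k" by (simp add: mult.assoc)
  qed
  show ?thesis unfolding eq using t1 t2 by simp
qed

lemma L_const:
  fixes w :: "nat \<Rightarrow> int" and n l :: nat and d :: int
  assumes n: "0 < n" and h: "\<forall>l<n. d dvd w l - w ((l + n - 1) mod n)"
  shows "l < n \<Longrightarrow> d dvd w l - w 0"
proof (induction l)
  case 0 then show ?case by simp
next
  case (Suc l)
  have "(Suc l + n - 1) mod n = l" using Suc.prems by simp
  then have "d dvd w (Suc l) - w l" using h[rule_format, OF Suc.prems] by simp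
  moreover have "d dvd w l - w 0" using Suc by simp
  ultimately have "d dvd (w (Suc l) - w l) + (w l - w 0)" by (rule dvd_add)
  then show ?case by simp
qed

lemma L_const2:
  fixes w :: "nat \<Rightarrow> int" and n l l' :: nat and d :: int
  assumes n: "0 < n" and h: "\<forall>l<n. d dvd w l - w ((l + n - 1) mod n)" and l: "l < n" and l': "l' < n"
  shows "d dvd w l - w l'"
proof -
  have "d dvd (w l - w 0) - (w l' - w 0)" using L_const[OF n h l] L_const[OF n h l'] by (rule dvd_diff)
  then show ?thesis by simp
qed

lemma G_last:
  assumes n: "0 < n"
  shows "(D n ^^ (n - 1)) e0 (n - 1) = (-1) ^ (n - 1)"
proof -
  have "(D n ^^ (n - 1)) e0 (n - 1) = (\<Sum>k\<le>n - 1. (-1)^k * int ((n - 1) choose k) * e0 ((n - 1 + n - k) mod n))"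
    using D_formula[of "n - 1" n "n - 1" e0] n by simp
  also have "\<dots> = (\<Sum>k\<le>n - 1. if k = n - 1 then (-1)^(n-1) else 0)"
  proof (rule sum.cong)
    fix k assume k: "k \<in> {..n - 1}"
    then have kk: "k \<le> n - 1" by simp
    have e1: "n - 1 + n - k = (n - 1 - k) + n" using kk n by arith
    have e2: "(n - 1 + n - k) mod n = n - 1 - k" unfolding e1 using n by simp
    have e3: "e0 (n - 1 - k) = (if k = n - 1 then 1 else 0)" using kk by (auto simp: e0_def)
    show "(-1)^k * int ((n - 1) choose k) * e0 ((n - 1 + n - k) mod n) = (if k = n - 1 then (-1)^(n-1) else 0)"
      unfolding e2 e3 by simp
  qed simp
  also have "\<dots> = (-1) ^ (n - 1)" by simp
  finally show ?thesis .
qed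



definition Vc :: "nat \<Rightarrow> nat \<Rightarrow> nat \<Rightarrow> nat \<Rightarrow> (nat \<Rightarrow> int) \<Rightarrow> bool" where
  "Vc n p b i u \<longleftrightarrow> (\<forall>l<n. int p ^ (b - i div n - 1) dvd u l) \<and>
      (\<forall>l<n. int p ^ (b - i div n) dvd (D n ^^ (i mod n)) u l)"

definition genc :: "nat \<Rightarrow> nat \<Rightarrow> nat \<Rightarrow> nat \<Rightarrow> nat \<Rightarrow> int" where
  "genc n p b i = (\<lambda>l. int p ^ (b - i div n - 1) * (D n ^^ (n - 1 - i mod n)) e0 l)"

definition Zc :: "nat \<Rightarrow> nat \<Rightarrow> nat \<Rightarrow> (nat \<Rightarrow> int) \<Rightarrow> bool" where
  "Zc n p b u \<longleftrightarrow> (\<forall>l<n. int p ^ b dvd u l)"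

lemma divmod_Suc1: "0 < n \<Longrightarrow> Suc (i mod n) < n \<Longrightarrow> Suc i div n = i div n \<and> Suc i mod n = Suc (i mod n)"
  by (simp add: mod_Suc div_Suc)

lemma divmod_Suc2: "0 < n \<Longrightarrow> \<not> Suc (i mod n) < n \<Longrightarrow> Suc i div n = Suc (i div n) \<and> Suc i mod n = 0"
proof -
  assume n: "0 < n" and h: "\<not> Suc (i mod n) < n"
  have "i mod n < n" using n by simp
  then have "Suc (i mod n) = n" using h by simp
  then show ?thesis by (simp add: mod_Suc div_Suc)
qed

locale conc =
  fixes p a b n :: nat
  assumes p: "prime p" and a: "0 < a" and b: "0 < b" and nn: "n = p ^ a"
begin

lemma n_pos: "0 < n" using nn p a by (simp add: prime_gt_0_nat)

lemma p_pos: "0 < p" using p by (simp add: prime_gt_0_nat)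

lemma V_succ:
  assumes iN: "i < b * n"
  shows "Vc n p b (Suc i) u \<longleftrightarrow> (\<forall>l<n. int p ^ (b - i div n - 1) dvd u l) \<and>
      (\<forall>l<n. int p ^ (b - i div n) dvd (D n ^^ Suc (i mod n)) u l)"
proof (cases "Suc (i mod n) < n")
  case True
  then show ?thesis using divmod_Suc1[OF n_pos True] by (simp add: Vc_def)
next
  case False
  have dm: "Suc i div n = Suc (i div n)" "Suc i mod n = 0" using divmod_Suc2[OF n_pos False] by auto
  have jn: "Suc (i mod n) = n" using False n_pos by (metis Suc_lessI mod_less_divisor)
  have sb: "i div n < b" using iN n_pos by (simp add: div_less_iff_less_mult)
  have e: "b - i div n = Suc (b - i div n - 1)" using sb by simp
  have pd: "int p ^ (b - Suc (i div n) - 1) dvd int p ^ (b - i div n - 1)"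
    by (rule le_imp_power_dvd) simp
  show ?thesis
  proof
    assume "Vc n p b (Suc i) u"
    then have u: "\<forall>l<n. int p ^ (b - i div n - 1) dvd u l" unfolding Vc_def dm by simp
    have "\<forall>l<n. int p ^ Suc (b - i div n - 1) dvd (D n ^^ n) u l"
      using F2[OF p a nn u] by blast
    then show "(\<forall>l<n. int p ^ (b - i div n - 1) dvd u l) \<and>
      (\<forall>l<n. int p ^ (b - i div n) dvd (D n ^^ Suc (i mod n)) u l)"
      using u jn e by simp
  next
    assume h: "(\<forall>l<n. int p ^ (b - i div n - 1) dvd u l) \<and>
      (\<forall>l<n. int p ^ (b - i div n) dvd (D n ^^ Suc (i mod n)) u l)"
    then show "Vc n p b (Suc i) u" unfolding Vc_def dm using pd dvd_trans by auto
  qed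
qed

lemma Vmono: "Vc n p b i u \<Longrightarrow> Vc n p b (Suc i) u"
proof (cases "Suc (i mod n) < n")
  case True
  assume V: "Vc n p b i u"
  have dm: "Suc i div n = i div n" "Suc i mod n = Suc (i mod n)" using divmod_Suc1[OF n_pos True] by auto
  show ?thesis unfolding Vc_def dm
  proof (intro conjI allI impI)
    fix l assume l: "l < n"
    show "int p ^ (b - i div n - 1) dvd u l" using V l by (simp add: Vc_def)
    have "\<forall>l<n. int p ^ (b - i div n) dvd (D n ^^ (i mod n)) u l" using V by (simp add: Vc_def)
    then show "int p ^ (b - i div n) dvd (D n ^^ Suc (i mod n)) u l"
      using D_dvd1[OF n_pos _ l] by simp
  qed
next
  case False
  assume V: "Vc n p b i u"
  have dm: "Suc i div n = Suc (i div n)" "Suc i mod n = 0" using divmod_Suc2[OF n_pos False] by auto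
  have pd: "int p ^ (b - Suc (i div n) - 1) dvd int p ^ (b - i div n - 1)"
    by (rule le_imp_power_dvd) simp
  show ?thesis unfolding Vc_def dm using V pd dvd_trans by (auto simp: Vc_def)
qed

lemma Vadd: "Vc n p b i u \<Longrightarrow> Vc n p b i w \<Longrightarrow> Vc n p b i (\<lambda>l. u l + w l)"
  unfolding Vc_def D_pow_add by (auto intro: dvd_add)

lemma Vsmult: "Vc n p b i u \<Longrightarrow> Vc n p b i (\<lambda>l. c * u l)"
  unfolding Vc_def D_pow_smult by (auto intro: dvd_mult)

lemma Vdiff:
  assumes iN: "i < b * n" and k: "k < n" and V: "Vc n p b (Suc i) u"
  shows "Vc n p b i (\<lambda>l. rot n k u l - u l)"
proof -
  let ?s = "i div n" and ?j = "i mod n"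
  have E1: "\<forall>l<n. int p ^ (b - ?s - 1) dvd u l" and E2: "\<forall>l<n. int p ^ (b - ?s) dvd (D n ^^ Suc ?j) u l"
    using V V_succ[OF iN] by auto
  let ?w = "(D n ^^ ?j) u"
  have lin: "(D n ^^ ?j) (\<lambda>l. rot n k u l - u l) = (\<lambda>l. rot n k ?w l - ?w l)"
    using D_pow_lin[where n=n and j="?j" and u="rot n k u" and c=1 and v=u] D_pow_rot[OF k] by simp
  have h: "\<forall>l<n. int p ^ (b - ?s) dvd ?w l - ?w ((l + n - 1) mod n)"
    using E2 by (simp add: D_def)
  show ?thesis unfolding Vc_def lin
  proof (intro conjI allI impI)
    fix l assume l: "l < n"
    have idx: "(l + n - k) mod n < n" using n_pos by simp
    show "int p ^ (b - ?s - 1) dvd rot n k u l - u l"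
      unfolding rot_def using E1 idx l by (intro dvd_diff) auto
    show "int p ^ (b - ?s) dvd rot n k ?w l - ?w l"
      unfolding rot_def using L_const2[OF n_pos h idx l] .
  qed
qed

lemma G_props:
  shows "\<forall>l<n. int p dvd D n ((D n ^^ (n - 1)) e0) l"
    and "(D n ^^ (n - 1)) e0 (n - 1) * (D n ^^ (n - 1)) e0 (n - 1) = 1"
proof -
  have "D n ((D n ^^ (n - 1)) e0) = (D n ^^ Suc (n - 1)) e0" by simp
  also have "Suc (n - 1) = n" using n_pos by simp
  finally have eq: "D n ((D n ^^ (n - 1)) e0) = (D n ^^ n) e0" .
  have "\<forall>l<n. int p ^ 0 dvd e0 l" by simp
  then show "\<forall>l<n. int p dvd D n ((D n ^^ (n - 1)) e0) l"
    unfolding eq using F2[OF p a nn] by (metis power_one_right One_nat_def)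
  show "(D n ^^ (n - 1)) e0 (n - 1) * (D n ^^ (n - 1)) e0 (n - 1) = 1"
    using G_last[OF n_pos] by (simp flip: power_add)
qed

lemma Dgen:
  assumes j: "j < n"
  shows "(D n ^^ j) ((D n ^^ (n - 1 - j)) e0) = (D n ^^ (n - 1)) e0"
proof -
  have "(D n ^^ j) ((D n ^^ (n - 1 - j)) e0) = (D n ^^ (j + (n - 1 - j))) e0"
    by (simp add: funpow_add)
  also have "j + (n - 1 - j) = n - 1" using j by simp
  finally show ?thesis .
qed

lemma Vdec:
  assumes iN: "i < b * n" and V: "Vc n p b (Suc i) u"
  shows "\<exists>c. Vc n p b i (\<lambda>l. u l - c * genc n p b i l)"
proof -
  let ?s = "i div n" and ?j = "i mod n"
  define e where "e = b - ?s - 1"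
  have sb: "?s < b" using iN n_pos by (simp add: div_less_iff_less_mult)
  have be: "b - ?s = Suc e" using sb unfolding e_def by simp
  have jn: "?j < n" using n_pos by simp
  have VV: "(\<forall>l<n. int p ^ (b - ?s - 1) dvd u l) \<and> (\<forall>l<n. int p ^ (b - ?s) dvd (D n ^^ Suc ?j) u l)"
    using V V_succ[OF iN] by blast
  have E1: "\<forall>l<n. int p ^ e dvd u l" unfolding e_def by (rule conjunct1[OF VV])
  have E2: "\<forall>l<n. int p ^ Suc e dvd (D n ^^ Suc ?j) u l" unfolding be[symmetric] by (rule conjunct2[OF VV])
  define w where "w = (D n ^^ ?j) u"
  have hw: "\<forall>l<n. int p ^ e dvd w l" unfolding w_def using D_pow_dvd[OF n_pos E1] by blast
  have hDw: "\<forall>l<n. int p ^ Suc e dvd D n w l" using E2 unfolding w_def by simp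
  define G where "G = (D n ^^ (n - 1)) e0"
  have DG: "\<forall>l<n. int p dvd D n G l" and G2: "G (n - 1) * G (n - 1) = 1"
    using G_props unfolding G_def by auto
  have gen_eq: "genc n p b i = (\<lambda>l. int p ^ e * (D n ^^ (n - 1 - ?j)) e0 l)"
    unfolding genc_def e_def by simp
  have Dj_gen: "(D n ^^ ?j) (genc n p b i) = (\<lambda>l. int p ^ e * G l)"
    unfolding gen_eq D_pow_smult Dgen[OF jn] G_def ..
  have n1: "n - 1 < n" using n_pos by simp
  obtain q where q: "w (n - 1) = int p ^ e * q" using hw n1 by (auto elim: dvdE)
  define c where "c = q * G (n - 1)"
  define y where "y = (\<lambda>l. w l - c * (int p ^ e * G l))"
  have Dj: "(D n ^^ ?j) (\<lambda>l. u l - c * genc n p b i l) = y"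
    unfolding D_pow_lin Dj_gen y_def w_def ..
  have Dy: "D n y l = D n w l - c * (int p ^ e * D n G l)" for l
    unfolding y_def D_def by (simp add: algebra_simps)
  have hDy: "\<forall>l<n. int p ^ Suc e dvd y l - y ((l + n - 1) mod n)"
  proof (intro allI impI)
    fix l assume l: "l < n"
    obtain t where t: "D n G l = int p * t" using DG l by (auto elim: dvdE)
    have "int p ^ Suc e dvd D n w l - c * (int p ^ e * D n G l)"
    proof (rule dvd_diff)
      show "int p ^ Suc e dvd D n w l" using hDw l by simp
      have eqc: "c * (int p ^ e * D n G l) = int p ^ Suc e * (c * t)" using t by (simp add: algebra_simps)
      show "int p ^ Suc e dvd c * (int p ^ e * D n G l)" unfolding eqc by (rule dvd_triv_left)
    qed
    then show "int p ^ Suc e dvd y l - y ((l + n - 1) mod n)" using Dy[of l] by (simp add: D_def)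
  qed
  have y0: "y (n - 1) = 0"
  proof -
    have "y (n - 1) = int p ^ e * q - q * (G (n - 1) * G (n - 1)) * int p ^ e"
      unfolding y_def c_def q by (simp add: algebra_simps)
    then show ?thesis using G2 by simp
  qed
  have "Vc n p b i (\<lambda>l. u l - c * genc n p b i l)"
    unfolding Vc_def Dj
  proof (intro conjI allI impI)
    fix l assume l: "l < n"
    show "int p ^ (b - ?s - 1) dvd u l - c * genc n p b i l"
      unfolding e_def[symmetric] gen_eq using E1 l by (auto intro!: dvd_diff dvd_mult)
    show "int p ^ (b - ?s) dvd y l"
      unfolding be using L_const2[OF n_pos hDy l n1] y0 by simp
  qed
  then show ?thesis by blast
qed

lemma Vgen:
  assumes iN: "i < b * n"
  shows "Vc n p b (Suc i) (genc n p b i)"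
proof -
  let ?s = "i div n" and ?j = "i mod n"
  define e where "e = b - ?s - 1"
  have sb: "?s < b" using iN n_pos by (simp add: div_less_iff_less_mult)
  have be: "b - ?s = Suc e" using sb unfolding e_def by simp
  have jn: "?j < n" using n_pos by simp
  have gen_eq: "genc n p b i = (\<lambda>l. int p ^ e * (D n ^^ (n - 1 - ?j)) e0 l)"
    unfolding genc_def e_def by simp
  have "(D n ^^ Suc ?j) (genc n p b i) = D n ((D n ^^ ?j) (genc n p b i))" by simp
  also have "\<dots> = D n (\<lambda>l. int p ^ e * (D n ^^ (n - 1)) e0 l)"
    unfolding gen_eq D_pow_smult Dgen[OF jn] ..
  finally have eq: "(D n ^^ Suc ?j) (genc n p b i) = (\<lambda>l. int p ^ e * D n ((D n ^^ (n - 1)) e0) l)"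
    by (simp add: D_def algebra_simps)
  have c1: "\<forall>l<n. int p ^ (b - ?s - 1) dvd genc n p b i l"
    unfolding e_def[symmetric] gen_eq by simp
  have c2: "\<forall>l<n. int p ^ (b - ?s) dvd (D n ^^ Suc ?j) (genc n p b i) l"
  proof (intro allI impI)
    fix l assume l: "l < n"
    obtain t where t: "D n ((D n ^^ (n - 1)) e0) l = int p * t" using G_props(1) l by (auto elim: dvdE)
    have "int p ^ Suc e dvd int p ^ e * D n ((D n ^^ (n - 1)) e0) l"
      unfolding t by (simp add: algebra_simps)
    then show "int p ^ (b - ?s) dvd (D n ^^ Suc ?j) (genc n p b i) l" unfolding be eq by simp
  qed
  show ?thesis using V_succ[OF iN] c1 c2 by blast
qed

lemma Vpgen:
  assumes iN: "i < b * n"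
  shows "Vc n p b i (\<lambda>l. int p * genc n p b i l)"
proof -
  let ?s = "i div n" and ?j = "i mod n"
  define e where "e = b - ?s - 1"
  have sb: "?s < b" using iN n_pos by (simp add: div_less_iff_less_mult)
  have be: "b - ?s = Suc e" using sb unfolding e_def by simp
  have jn: "?j < n" using n_pos by simp
  have gen_eq: "genc n p b i = (\<lambda>l. int p ^ e * (D n ^^ (n - 1 - ?j)) e0 l)"
    unfolding genc_def e_def by simp
  have eq: "(D n ^^ ?j) (\<lambda>l. int p * genc n p b i l) = (\<lambda>l. int p * (int p ^ e * (D n ^^ (n - 1)) e0 l))"
    unfolding D_pow_smult gen_eq Dgen[OF jn] ..
  show ?thesis unfolding Vc_def e_def[symmetric] be eq
    by (auto simp: gen_eq algebra_simps)
qed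

lemma chain: "strat_chain n p (Vc n p b) (genc n p b) (Zc n p b) (b * n)"
proof
  show "0 < p" by (rule p_pos)
  show "\<And>u. Vc n p b 0 u \<Longrightarrow> Zc n p b u" by (simp add: Vc_def Zc_def)
qed (auto intro: Vadd Vsmult Vmono Vdiff Vdec Vgen Vpgen)

lemma Vtop: "Vc n p b (b * n) u"
  using n_pos by (simp add: Vc_def)

end



definition cfg :: "nat \<Rightarrow> nat \<Rightarrow> (nat \<Rightarrow> int) \<Rightarrow> (nat \<Rightarrow> nat)" where
  "cfg n m u = (\<lambda>l. if l < n then nat (u l mod int m) else 0)"

lemma valid_cfg: "0 < m \<Longrightarrow> valid_config n m (cfg n m u)"
  unfolding valid_config_def cfg_def by (auto simp: nat_less_iff)

lemma add_cfg:
  assumes m: "0 < m"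
  shows "add_move n m (cfg n m u) (cfg n m w) = cfg n m (\<lambda>l. u l + w l)"
proof
  fix l
  show "add_move n m (cfg n m u) (cfg n m w) l = cfg n m (\<lambda>l. u l + w l) l"
  proof (cases "l < n")
    case True
    let ?A = "u l mod int m" and ?B = "w l mod int m"
    have A: "0 \<le> ?A" and B: "0 \<le> ?B" using m by auto
    have "(nat ?A + nat ?B) mod m = nat (?A + ?B) mod nat (int m)" using A B by (simp add: nat_add_distrib)
    also have "\<dots> = nat ((?A + ?B) mod int m)" using A B m by (simp add: nat_mod_distrib)
    also have "(?A + ?B) mod int m = (u l + w l) mod int m" by (rule mod_add_eq)
    finally show ?thesis using True by (simp add: add_move_def cfg_def)
  next
    case False
    then show ?thesis by (simp add: add_move_def cfg_def)
  qed
qed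

lemma rot_cfg: "0 < n \<Longrightarrow> rotate_config n k (cfg n m u) = cfg n m (rot n k u)"
  unfolding rotate_config_def cfg_def rot_def by auto

lemma game_cfg:
  assumes n: "0 < n" and m: "0 < m"
  shows "t \<le> length W \<Longrightarrow> game_state n m (map (cfg n m) W) ks (cfg n m u) t = cfg n m (istate n W ks u t)"
proof (induction t)
  case 0 then show ?case by simp
next
  case (Suc t)
  then have t: "t < length W" by simp
  have "game_state n m (map (cfg n m) W) ks (cfg n m u) (Suc t)
      = rotate_config n (ks t) (add_move n m (cfg n m (istate n W ks u t)) (cfg n m (W ! t)))"
    using Suc t by simp
  also have "\<dots> = cfg n m (istate n W ks u (Suc t))"
    by (simp add: add_cfg[OF m] rot_cfg[OF n])
  finally show ?case .
qed

lemma cfg_of_valid: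
  assumes "valid_config n m x"
  shows "x = cfg n m (\<lambda>l. int (x l))"
proof
  fix l show "x l = cfg n m (\<lambda>l. int (x l)) l"
    using assms unfolding valid_config_def cfg_def by (cases "l < n") auto
qed

lemma cfg_zero:
  assumes "\<forall>l<n. int m dvd s l"
  shows "cfg n m s = (\<lambda>_. 0)"
proof
  fix l show "cfg n m s l = 0" using assms unfolding cfg_def by (cases "l < n") auto
qed

theorem mainTheorem8:
  fixes p a b :: nat
  assumes "prime p" and "0 < a" and "0 < b"
  shows "\<exists>ys. length ys = p ^ (b * p ^ a) - 1 \<and> winning (p ^ a) (p ^ b) ys"
proof -
  define n where "n = p ^ a"
  define m where "m = p ^ b"
  interpret conc p a b n using assms n_def by unfold_locales auto
  interpret sc: strat_chain n p "Vc n p b" "genc n p b" "Zc n p b" "b * n" by (rule chain)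
  have mpos: "0 < m" unfolding m_def using p_pos by simp
  define W where "W = sc.strat (b * n)"
  have lenW: "length W = p ^ (b * n) - 1" using sc.length_strat[of "b * n"] unfolding W_def by simp
  have MC: "\<forall>u ks. (\<forall>t. ks t < n) \<longrightarrow> Vc n p b (b * n) u \<longrightarrow>
      (\<exists>t\<le>length W. Zc n p b (istate n W ks u t))"
    using sc.main_chain[of "b * n"] unfolding W_def by blast
  have win: "winning n m (map (cfg n m) W)"
    unfolding winning_def
  proof (intro conjI allI impI)
    show "\<forall>y\<in>set (map (cfg n m) W). valid_config n m y" using valid_cfg[OF mpos] by auto
    fix x and ks :: "nat \<Rightarrow> nat" assume x: "valid_config n m x" and ks: "\<forall>t. ks t < n"
    let ?u = "\<lambda>l. int (x l)"
    obtain t where t: "t \<le> length W" "Zc n p b (istate n W ks ?u t)"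
      using MC Vtop ks by blast
    have "game_state n m (map (cfg n m) W) ks x t = cfg n m (istate n W ks ?u t)"
      using game_cfg[OF n_pos mpos t(1)] cfg_of_valid[OF x] by metis
    also have "\<dots> = (\<lambda>_. 0)"
      using t(2) unfolding Zc_def m_def by (intro cfg_zero) (simp add: of_nat_power)
    finally show "\<exists>t\<le>length (map (cfg n m) W). game_state n m (map (cfg n m) W) ks x t = (\<lambda>_. 0)"
      using t(1) by auto
  qed
  show ?thesis
    using win lenW unfolding n_def m_def by (intro exI[of _ "map (cfg (p ^ a) (p ^ b)) W"]) simp
qed


end
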